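(* Let $d\in\mathbb{N}$ and $M(t)=t\log(e+t)$, $t>0$. For every measurable $f$ on $\mathbb{R}^d\setminus\mathbb{B}^d$, $$\|Vf\|_{L_M(\mathbb{B}^d)}\leq (2d+2)\|f\|_{L_M(\mathbb{R}^d\setminus\mathbb{B}^d)}+(2d+2)\int_{\mathbb{R}^d\setminus\mathbb{B}^d}|f(s)|\log(1+|s|)ds.$$
   Context: $\mathbb{B}^d$ is the unit ball in $\mathbb{R}^d$; all spaces carry Lebesgue measure. $(Vf)(t)=|t|^{-2d}f(t/|t|^2)$, so for $f$ on $\mathbb{R}^d\setminus\mathbb{B}^d$ the function $Vf$ is defined on $\mathbb{B}^d$. For a measurable set $\Omega$, $\|g\|_{L_M(\Omega)}=\inf\{\lambda>0:\int_\Omega M(|g|/\lambda)\le1\}$. *)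

theory Defs
  imports "HOL-Analysis.Analysis"
begin

definition LlogL :: "real \<Rightarrow> real" where
  "LlogL t = t * ln (exp 1 + t)"

text \<open>Luxemburg norm on a set Omega w.r.t. Lebesgue measure, valued in [0, infinity]
  (the infimum of the empty set is infinity).\<close>
definition orlicz_norm :: "(real \<Rightarrow> real) \<Rightarrow> 'a::euclidean_space set \<Rightarrow> ('a \<Rightarrow> real) \<Rightarrow> ennreal" where
  "orlicz_norm M \<Omega> g =
     (INF c\<in>{c::real. c > 0 \<and> (\<integral>\<^sup>+ x\<in>\<Omega>. ennreal (M (\<bar>g x\<bar> / c)) \<partial>lebesgue) \<le> 1}. ennreal c)"

definition Vop :: "('a::euclidean_space \<Rightarrow> real) \<Rightarrow> 'a \<Rightarrow> real" where
  "Vop f t = norm t powr (- 2 * real DIM('a)) * f (t /\<^sub>R (norm t)\<^sup>2)"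

end

theory Submission
  imports Defs
begin

definition inv_pt :: "'a::real_inner \<Rightarrow> 'a" where
  "inv_pt x = inverse (x \<bullet> x) *\<^sub>R x"

definition refl_pt :: "'a::real_inner \<Rightarrow> 'a \<Rightarrow> 'a" where
  "refl_pt x h = h - (2 * (x \<bullet> h) / (x \<bullet> x)) *\<^sub>R x"

lemma inv_pt_deriv:
  fixes x :: "'a::real_inner"
  assumes "x \<noteq> 0"
  shows "(inv_pt has_derivative (\<lambda>h. inverse (x \<bullet> x) *\<^sub>R refl_pt x h)) (at x within S)"
proof -
  have xx: "x \<bullet> x \<noteq> 0" using assms by simp
  have d: "((\<lambda>y. inverse (y \<bullet> y) *\<^sub>R y) has_derivative
     (\<lambda>h. inverse (x \<bullet> x) *\<^sub>R h + (- (inverse (x \<bullet> x) * (x \<bullet> h + h \<bullet> x) * inverse (x \<bullet> x))) *\<^sub>R x)) (at x within S)"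
    by (rule has_derivative_scaleR[OF Deriv.has_derivative_inverse[OF xx has_derivative_inner[OF has_derivative_ident has_derivative_ident]] has_derivative_ident])
  have c: "(- (inverse (x \<bullet> x) * (x \<bullet> h + h \<bullet> x) * inverse (x \<bullet> x))) = - (inverse (x \<bullet> x) * (2 * (x \<bullet> h) / (x \<bullet> x)))" for h
    by (simp add: inner_commute[of h x] divide_inverse)
  have e: "inverse (x \<bullet> x) *\<^sub>R h + (- (inverse (x \<bullet> x) * (x \<bullet> h + h \<bullet> x) * inverse (x \<bullet> x))) *\<^sub>R x
     = inverse (x \<bullet> x) *\<^sub>R refl_pt x h" for h
    unfolding c refl_pt_def scaleR_diff_right scaleR_scaleR scaleR_minus_left by simp
  show ?thesis unfolding inv_pt_def[abs_def] using d e by simp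
qed

lemma refl_pt_orth:
  fixes x :: "'a::real_inner"
  assumes "x \<noteq> 0"
  shows "orthogonal_transformation (refl_pt x)"
  unfolding orthogonal_transformation_def
proof
  show "linear (refl_pt x)"
    unfolding refl_pt_def by (auto intro!: linearI simp: inner_add_right algebra_simps add_divide_distrib scaleR_add_left)
next
  have xx: "x \<bullet> x \<noteq> 0" using assms by simp
  show "\<forall>v w. refl_pt x v \<bullet> refl_pt x w = v \<bullet> w"
  proof (intro allI)
    fix v w
    let ?a = "2 * (x \<bullet> v) / (x \<bullet> x)" and ?b = "2 * (x \<bullet> w) / (x \<bullet> x)"
    have "refl_pt x v \<bullet> refl_pt x w = v \<bullet> w - ?b * (x \<bullet> v) - ?a * (x \<bullet> w) + ?a * ?b * (x \<bullet> x)"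
      unfolding refl_pt_def inner_diff_left inner_diff_right inner_scaleR_left inner_scaleR_right
      by (simp add: inner_commute[of v x] inner_commute[of w x] algebra_simps)
    also have "\<dots> = v \<bullet> w"
      using xx by (simp add: divide_simps)
    finally show "refl_pt x v \<bullet> refl_pt x w = v \<bullet> w" .
  qed
qed

lemma refl_pt_invol: 
  fixes x :: "'a::real_inner"
  assumes "x \<noteq> 0"
  shows "refl_pt x (refl_pt x h) = h"
proof -
  have xx: "x \<bullet> x \<noteq> 0" using assms by simp
  have "x \<bullet> refl_pt x h = - (x \<bullet> h)"
    unfolding refl_pt_def inner_diff_right inner_scaleR_right using xx by simp
  then show ?thesis by (simp add: refl_pt_def[of x "refl_pt x h"]) (simp add: refl_pt_def)
qed

lemma refl_pt_scale:
  fixes x :: "'a::real_inner"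
  assumes "c \<noteq> 0"
  shows "refl_pt (c *\<^sub>R x) = refl_pt x"
proof
  fix h
  have "(2 * (c *\<^sub>R x \<bullet> h) / (c *\<^sub>R x \<bullet> c *\<^sub>R x)) *\<^sub>R (c *\<^sub>R x) = (2 * (x \<bullet> h) / (x \<bullet> x)) *\<^sub>R x"
    using assms by (simp add: power2_eq_square)
  then show "refl_pt (c *\<^sub>R x) h = refl_pt x h" by (simp add: refl_pt_def)
qed

lemma inv_pt_inv:
  fixes x :: "'a::real_inner"
  shows "inv_pt (inv_pt x) = x"
  by (cases "x = 0") (auto simp: inv_pt_def field_simps)

lemma inner_inv_pt: "inv_pt x \<bullet> inv_pt x = inverse (x \<bullet> x)"
  by (cases "x \<bullet> x = 0") (auto simp: inv_pt_def field_simps power2_eq_square)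

lemma norm_inv_pt:
  fixes x :: "'a::real_inner"
  shows "norm (inv_pt x) = inverse (norm x)"
  by (simp add: norm_eq_sqrt_inner inner_inv_pt real_sqrt_inverse)

lemma det_inv_pt_deriv:
  fixes x :: "real^'n"
  assumes "x \<noteq> 0"
  shows "\<bar>det (matrix (\<lambda>h. inverse (x \<bullet> x) *\<^sub>R refl_pt x h))\<bar> = inverse (x \<bullet> x) ^ CARD('n)"
proof -
  have o: "orthogonal_transformation (refl_pt x)" using refl_pt_orth[OF assms] .
  have lin: "linear (refl_pt x)" using o orthogonal_transformation_linear by blast
  have "(\<lambda>h. inverse (x \<bullet> x) *\<^sub>R refl_pt x h) = ((*\<^sub>R) (inverse (x \<bullet> x))) \<circ> refl_pt x" by auto
  then have "matrix (\<lambda>h. inverse (x \<bullet> x) *\<^sub>R refl_pt x h) = mat (inverse (x \<bullet> x)) ** matrix (refl_pt x)"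
    using matrix_compose[OF lin, of "(*\<^sub>R) (inverse (x \<bullet> x))"] by (simp add: matrix_scaleR linear_scaleR)
  then have "det (matrix (\<lambda>h. inverse (x \<bullet> x) *\<^sub>R refl_pt x h)) = det (mat (inverse (x \<bullet> x)) :: real^'n^'n) * det (matrix (refl_pt x))"
    by (simp add: det_mul)
  moreover have "det (mat (inverse (x \<bullet> x)) :: real^'n^'n) = inverse (x \<bullet> x) ^ CARD('n)"
    by (subst det_diagonal) (auto simp: mat_def)
  moreover have "\<bar>det (matrix (refl_pt x))\<bar> = 1" using o by simp
  ultimately show ?thesis by (simp add: abs_mult)
qed


lemma inv_pt_eq0 [simp]: "inv_pt x = 0 \<longleftrightarrow> x = 0"
  by (simp add: inv_pt_def)

lemma refl_pt_scaleR: "refl_pt x (c *\<^sub>R h) = c *\<^sub>R refl_pt x h"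
  by (simp add: refl_pt_def scaleR_diff_right)

lemma cvn:
  fixes g :: "real^'n::{finite,wellorder} \<Rightarrow> real"
  assumes gm: "g \<in> borel_measurable lebesgue" and g0: "\<And>x. 0 \<le> g x" and gC: "\<And>x. g x \<le> C"
    and gT: "\<And>x. x \<notin> ball 0 1 - {0} \<Longrightarrow> g x = 0"
  shows "(\<lambda>s. if 1 < norm s then inverse (s \<bullet> s) ^ CARD('n) * g (inv_pt s) else 0) \<in> borel_measurable lebesgue
     \<and> (\<integral>\<^sup>+x. ennreal (g x) \<partial>lebesgue) = (\<integral>\<^sup>+s. ennreal (if 1 < norm s then inverse (s \<bullet> s) ^ CARD('n) * g (inv_pt s) else 0) \<partial>lebesgue)"
proof -
  define T where "T = ball (0::real^'n::{finite,wellorder}) 1 - {0}"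
  define S where "S = {s::real^'n::{finite,wellorder}. 1 < norm s}"
  define D where "D = (\<lambda>x::real^'n::{finite,wellorder}. \<lambda>h. inverse (x \<bullet> x) *\<^sub>R refl_pt x h)"
  define F where "F = (\<lambda>s::real^'n::{finite,wellorder}. if 1 < norm s then inverse (s \<bullet> s) ^ CARD('n) * g (inv_pt s) else 0)"
  have C0: "0 \<le> C" using g0[of 0] gC[of 0] by linarith
  have "(\<integral>\<^sup>+x. ennreal (g x) \<partial>lebesgue) \<le> (\<integral>\<^sup>+x. ennreal C * indicator (ball (0::real^'n::{finite,wellorder}) 1) x \<partial>lebesgue)"
    by (rule nn_integral_mono) (use gC gT in \<open>auto simp: indicator_def intro: ennreal_leI\<close>)
  also have "\<dots> = ennreal C * emeasure lebesgue (ball (0::real^'n::{finite,wellorder}) 1)"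
    by (simp add: nn_integral_cmult_indicator)
  also have "\<dots> < \<infinity>"
    using fmeasurableD2[OF lmeasurable_ball[of "0::real^'n::{finite,wellorder}" 1]] by (simp add: ennreal_mult_less_top less_top)
  finally obtain r where r: "(\<integral>\<^sup>+x. ennreal (g x) \<partial>lebesgue) = ennreal r" "0 \<le> r"
    using less_top_ennreal by auto
  have "(g has_integral r) UNIV"
    using has_integral_iff_nn_integral_lebesgue[of g r] g0 gm r by auto
  moreover have "(\<lambda>x. if x \<in> T then g x else 0) = g" using gT by (auto simp: T_def fun_eq_iff)
  ultimately have gTi: "(g has_integral r) T"
    by (metis has_integral_restrict_UNIV)
  have nS: "x \<in> S \<Longrightarrow> x \<noteq> 0" for x by (auto simp: S_def)
  have nT: "x \<in> T \<Longrightarrow> x \<noteq> 0" for x by (auto simp: T_def)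
  have "((\<lambda>x. \<bar>det (matrix (D x))\<bar> * g (inv_pt x)) has_integral r) S \<longleftrightarrow> (g has_integral r) T"
  proof (rule cov_invertible_nonneg_eq)
    show "(inv_pt has_derivative D x) (at x within S)" if "x \<in> S" for x
      unfolding D_def by (rule inv_pt_deriv[OF nS[OF that]])
    show "(inv_pt has_derivative D y) (at y within T)" if "y \<in> T" for y
      unfolding D_def by (rule inv_pt_deriv[OF nT[OF that]])
    show "0 \<le> g y" for y by (rule g0)
    show "inv_pt x \<in> T \<and> inv_pt (inv_pt x) = x" if "x \<in> S" for x
      using that nS[OF that] by (auto simp: S_def T_def norm_inv_pt inv_pt_inv inverse_less_1_iff)
    show "inv_pt y \<in> S \<and> inv_pt (inv_pt y) = y" if "y \<in> T" for y
      using that nT[OF that] by (auto simp: S_def T_def norm_inv_pt inv_pt_inv one_less_inverse_iff)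
    show "D y \<circ> D (inv_pt y) = id" if "y \<in> T" for y
    proof
      fix k
      have yy: "y \<bullet> y \<noteq> 0" using nT[OF that] by simp
      have "D (inv_pt y) k = (y \<bullet> y) *\<^sub>R refl_pt y k"
        unfolding D_def inner_inv_pt using yy by (simp add: inv_pt_def refl_pt_scale)
      then show "(D y \<circ> D (inv_pt y)) k = id k"
        using yy nT[OF that] by (simp add: D_def refl_pt_scaleR refl_pt_invol)
    qed
  qed
  with gTi have "((\<lambda>x. \<bar>det (matrix (D x))\<bar> * g (inv_pt x)) has_integral r) S" by simp
  moreover have "\<bar>det (matrix (D x))\<bar> = inverse (x \<bullet> x) ^ CARD('n)" if "x \<in> S" for x
    unfolding D_def by (rule det_inv_pt_deriv[OF nS[OF that]])
  ultimately have "((\<lambda>x. inverse (x \<bullet> x) ^ CARD('n) * g (inv_pt x)) has_integral r) S"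
    by (metis (no_types, lifting) has_integral_cong)
  then have "((\<lambda>x. if x \<in> S then inverse (x \<bullet> x) ^ CARD('n) * g (inv_pt x) else 0) has_integral r) UNIV"
    by (simp only: has_integral_restrict_UNIV)
  then have "(F has_integral r) UNIV"
    by (simp add: F_def S_def)
  moreover have "0 \<le> F x" for x using g0 by (simp add: F_def)
  ultimately have "F \<in> borel_measurable lebesgue \<and> integral\<^sup>N lebesgue F = r"
    using has_integral_iff_nn_integral_lebesgue[of F r] by auto
  then show ?thesis using r unfolding F_def by auto
qed

lemma lborel_transfer:
  fixes L :: "'a::euclidean_space \<Rightarrow> 'b::euclidean_space"
  assumes lin: "linear L" and inn: "\<And>x y. L x \<bullet> L y = x \<bullet> y" and bas: "L ` Basis = Basis"
  shows "distr lborel borel L = lborel"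
proof -
  have injL: "inj L"
  proof (rule injI)
    fix x y assume "L x = L y"
    then have "L (x - y) = 0" using lin by (simp add: linear_diff)
    then have "(x - y) \<bullet> (x - y) = 0" using inn[of "x - y" "x - y"] by simp
    then show "x = y" by simp
  qed
  have "inj_on L Basis" using injL by (rule inj_on_subset) simp
  then have bij: "bij_betw L Basis Basis" using bas by (simp add: bij_betw_def)
  have Lmeas: "L \<in> borel_measurable borel"
    using lin by (intro borel_measurable_continuous_onI linear_continuous_on linear_conv_bounded_linear[THEN iffD1])
  have "lborel = distr lborel borel L"
  proof (rule lborel_eqI)
    fix l u :: 'b assume le: "\<And>b. b \<in> Basis \<Longrightarrow> l \<bullet> b \<le> u \<bullet> b"
    define l' where "l' = (\<Sum>a\<in>Basis. (l \<bullet> L a) *\<^sub>R a)"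
    define u' where "u' = (\<Sum>a\<in>Basis. (u \<bullet> L a) *\<^sub>R a)"
    have l'a: "l' \<bullet> a = l \<bullet> L a" if "a \<in> Basis" for a
      unfolding l'_def using that by (simp add: inner_sum_left inner_Basis if_distrib cong: if_cong)
    have u'a: "u' \<bullet> a = u \<bullet> L a" if "a \<in> Basis" for a
      unfolding u'_def using that by (simp add: inner_sum_left inner_Basis if_distrib cong: if_cong)
    have pre: "L -` box l u = box l' u'"
    proof -
      have "x \<in> L -` box l u \<longleftrightarrow> x \<in> box l' u'" for x
      proof -
        have "x \<in> L -` box l u \<longleftrightarrow> (\<forall>b\<in>Basis. l \<bullet> b < L x \<bullet> b \<and> L x \<bullet> b < u \<bullet> b)"
          by (simp add: mem_box)
        also have "\<dots> \<longleftrightarrow> (\<forall>b\<in>L ` Basis. l \<bullet> b < L x \<bullet> b \<and> L x \<bullet> b < u \<bullet> b)"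
          by (simp only: bas)
        also have "\<dots> \<longleftrightarrow> (\<forall>a\<in>Basis. l \<bullet> L a < L x \<bullet> L a \<and> L x \<bullet> L a < u \<bullet> L a)"
          by blast
        also have "\<dots> \<longleftrightarrow> x \<in> box l' u'"
          by (simp add: mem_box inn l'a u'a inner_commute[of x])
        finally show ?thesis .
      qed
      then show ?thesis by blast
    qed
    have "emeasure (distr lborel borel L) (box l u) = emeasure lborel (box l' u')"
      using Lmeas by (simp add: emeasure_distr pre)
    also have "\<dots> = (\<Prod>a\<in>Basis. (u' - l') \<bullet> a)"
      using le bas by (intro emeasure_lborel_box) (auto simp: l'a u'a)
    also have "\<dots> = (\<Prod>a\<in>Basis. (u - l) \<bullet> L a)"
      by (intro arg_cong[where f=ennreal] prod.cong) (auto simp: inner_diff_left l'a u'a)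
    also have "\<dots> = (\<Prod>b\<in>Basis. (u - l) \<bullet> b)"
      using prod.reindex_bij_betw[OF bij, of "\<lambda>b. (u - l) \<bullet> b"] by simp
    finally show "emeasure (distr lborel borel L) (box l u) = (\<Prod>b\<in>Basis. (u - l) \<bullet> b)" .
  qed simp
  then show ?thesis by simp
qed

lemma lebesgue_transfer:
  fixes L :: "'a::euclidean_space \<Rightarrow> 'b::euclidean_space"
  assumes lin: "linear L" and inn: "\<And>x y. L x \<bullet> L y = x \<bullet> y" and bas: "L ` Basis = Basis"
  shows "L \<in> lebesgue \<rightarrow>\<^sub>M lebesgue" and "distr lebesgue lebesgue L = lebesgue"
proof -
  have Lmeas[measurable]: "L \<in> borel \<rightarrow>\<^sub>M borel"
    using lin by (intro borel_measurable_continuous_onI linear_continuous_on linear_conv_bounded_linear[THEN iffD1])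
  have tr: "distr lborel borel L = lborel" by (rule lborel_transfer[OF lin inn bas])
  { fix A :: "'b set" assume A: "A \<in> sets borel"
    then have "emeasure lborel A = 0 \<longleftrightarrow> emeasure (distr lborel borel L) A = 0"
      by (simp add: tr)
    also have "\<dots> \<longleftrightarrow> emeasure (distr lebesgue lborel L) A = 0"
      using A by (simp add: distr_completion cong: distr_cong)
    finally have "emeasure lborel A = 0 \<longleftrightarrow> emeasure (distr lebesgue lborel L) A = 0" . }
  then have eq: "null_sets lborel = null_sets (distr lebesgue lborel L)"
    by (auto simp: null_sets_def)
  show "L \<in> lebesgue \<rightarrow>\<^sub>M lebesgue"
    by (simp add: completion.measurable_completion2 eq measurable_completion)
  have "lebesgue = completion (distr lborel borel L)"
    by (simp add: tr)
  also have "\<dots> = completion (distr lebesgue lborel L)"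
    by (simp add: distr_completion cong: distr_cong)
  also have "\<dots> = distr lebesgue lebesgue L"
    by (subst completion.completion_distr_eq) (auto simp: eq measurable_completion)
  finally show "distr lebesgue lebesgue L = lebesgue" ..
qed

typedef (overloaded) ('a::euclidean_space) bidx = "Basis :: 'a set"
  using nonempty_Basis by blast

instance bidx :: (euclidean_space) finite
proof
  have "(UNIV :: 'a bidx set) = Abs_bidx ` Basis"
    using type_definition.univ[OF type_definition_bidx] .
  then show "finite (UNIV :: 'a bidx set)" by (metis finite_Basis finite_imageI)
qed

instantiation bidx :: (euclidean_space) wellorder
begin
definition less_eq_bidx :: "'a bidx \<Rightarrow> 'a bidx \<Rightarrow> bool" where
  "less_eq_bidx x y \<longleftrightarrow> to_nat_on (UNIV :: 'a bidx set) x \<le> to_nat_on UNIV y"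
definition less_bidx :: "'a bidx \<Rightarrow> 'a bidx \<Rightarrow> bool" where
  "less_bidx x y \<longleftrightarrow> to_nat_on (UNIV :: 'a bidx set) x < to_nat_on UNIV y"
instance
proof
  have inj: "inj (to_nat_on (UNIV :: 'a bidx set))"
    by (rule inj_on_to_nat_on) simp
  fix x y z :: "'a bidx"
  show "(x < y) = (x \<le> y \<and> \<not> y \<le> x)" by (auto simp: less_eq_bidx_def less_bidx_def)
  show "x \<le> x" by (simp add: less_eq_bidx_def)
  show "x \<le> y \<Longrightarrow> y \<le> z \<Longrightarrow> x \<le> z" by (simp add: less_eq_bidx_def)
  show "x \<le> y \<Longrightarrow> y \<le> x \<Longrightarrow> x = y" using inj by (simp add: less_eq_bidx_def inj_eq)
  show "x \<le> y \<or> y \<le> x" by (auto simp: less_eq_bidx_def)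
next
  fix P :: "'a bidx \<Rightarrow> bool" and a
  assume step: "\<And>x. (\<And>y. y < x \<Longrightarrow> P y) \<Longrightarrow> P x"
  have "\<forall>x. to_nat_on (UNIV :: 'a bidx set) x = n \<longrightarrow> P x" for n
  proof (induction n rule: less_induct)
    case (less n)
    then show ?case using step by (auto simp: less_bidx_def)
  qed
  then show "P a" by blast
qed
end

definition Lb :: "'a::euclidean_space \<Rightarrow> real^('a bidx)" where
  "Lb x = (\<chi> i. x \<bullet> Rep_bidx i)"

definition Lbi :: "real^('a::euclidean_space bidx) \<Rightarrow> 'a" where
  "Lbi y = (\<Sum>i\<in>UNIV. (y $ i) *\<^sub>R Rep_bidx i)"

lemma bij_Rep_bidx: "bij_betw Rep_bidx UNIV (Basis :: 'a::euclidean_space set)"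
  by (metis bij_betw_def inj_on_def Rep_bidx_inject type_definition.Rep_range type_definition_bidx)

lemma Rep_bidx_inner: "Rep_bidx i \<bullet> Rep_bidx j = (if i = j then 1 else 0)"
  using Rep_bidx[of i] Rep_bidx[of j] by (auto simp: inner_Basis Rep_bidx_inject)

lemma sum_bidx: "(\<Sum>i\<in>UNIV. f (Rep_bidx i)) = (\<Sum>b\<in>(Basis :: 'a::euclidean_space set). f b)"
  using sum.reindex_bij_betw[OF bij_Rep_bidx, of f] by simp

lemma Lbi_Lb: "Lbi (Lb x) = x"
  unfolding Lbi_def Lb_def by (simp add: sum_bidx[of "\<lambda>b. (x \<bullet> b) *\<^sub>R b"] euclidean_representation)

lemma Lb_Lbi: "Lb (Lbi y) = y"
proof -
  have "Lbi y \<bullet> Rep_bidx i = y $ i" for i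
    unfolding Lbi_def inner_sum_left by (simp add: Rep_bidx_inner if_distrib cong: if_cong)
  then show ?thesis by (simp add: Lb_def vec_eq_iff)
qed

lemma linear_Lb: "linear Lb"
  by (rule linearI) (simp_all add: Lb_def vec_eq_iff inner_add_left)

lemma linear_Lbi: "linear Lbi"
  by (rule linearI) (simp_all add: Lbi_def scaleR_add_left sum.distrib scaleR_sum_right)

lemma inner_Lb: "Lb x \<bullet> Lb y = x \<bullet> y"
proof -
  have "Lb x \<bullet> Lb y = (\<Sum>i\<in>UNIV. (x \<bullet> Rep_bidx i) * (y \<bullet> Rep_bidx i))"
    by (simp add: Lb_def inner_vec_def)
  also have "\<dots> = (\<Sum>b\<in>Basis. (x \<bullet> b) * (y \<bullet> b))"
    by (rule sum_bidx)
  also have "\<dots> = x \<bullet> y" by (rule euclidean_inner[symmetric])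
  finally show ?thesis .
qed

lemma inner_Lbi: "Lbi x \<bullet> Lbi y = x \<bullet> y"
  by (metis inner_Lb Lb_Lbi)

lemma Lb_Basis: "Lb ` Basis = (Basis :: (real^('a::euclidean_space bidx)) set)"
proof -
  have ax: "Lb (Rep_bidx i) = (axis i 1 :: real^('a bidx))" for i :: "'a bidx"
    by (simp add: Lb_def axis_def vec_eq_iff Rep_bidx_inner)
  have "Lb ` (Basis :: 'a set) = Lb ` range (Rep_bidx :: 'a bidx \<Rightarrow> 'a)"
    using bij_Rep_bidx by (metis bij_betw_def)
  also have "\<dots> = range (\<lambda>i::'a bidx. axis i (1::real))"
    by (simp add: image_image ax)
  also have "\<dots> = Basis" by (auto simp: Basis_vec_def)
  finally show ?thesis .
qed

lemma Lbi_Basis: "Lbi ` Basis = (Basis :: 'a::euclidean_space set)"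
proof -
  have "Lbi ` Basis = Lbi ` Lb ` (Basis :: 'a set)" by (simp add: Lb_Basis)
  also have "\<dots> = Basis" by (simp add: image_image Lbi_Lb)
  finally show ?thesis .
qed

lemma card_bidx: "CARD('a::euclidean_space bidx) = DIM('a)"
  using bij_betw_same_card[OF bij_Rep_bidx] by simp

lemmas Lb_transfer = lebesgue_transfer[OF linear_Lb inner_Lb Lb_Basis]
lemmas Lbi_transfer = lebesgue_transfer[OF linear_Lbi inner_Lbi Lbi_Basis]


lemma norm_Lb: "norm (Lb x) = norm x"
  by (simp add: norm_eq_sqrt_inner inner_Lb)

lemma norm_Lbi: "norm (Lbi x) = norm x"
  by (simp add: norm_eq_sqrt_inner inner_Lbi)

lemma inv_pt_Lb: "inv_pt (Lb x) = Lb (inv_pt x)"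
  by (simp add: inv_pt_def inner_Lb linear_cmul[OF linear_Lb])

lemma cva_meas:
  fixes g :: "'a::euclidean_space \<Rightarrow> real"
  assumes gm: "g \<in> borel_measurable lebesgue" and g0: "\<And>x. 0 \<le> g x" and gC: "\<And>x. g x \<le> C"
    and gT: "\<And>x. x \<notin> ball 0 1 - {0} \<Longrightarrow> g x = 0"
  shows "(\<integral>\<^sup>+x. ennreal (g x) \<partial>lebesgue)
     = (\<integral>\<^sup>+s. ennreal (if 1 < norm s then inverse (s \<bullet> s) ^ DIM('a) * g (inv_pt s) else 0) \<partial>lebesgue)"
proof -
  define gn where "gn = (\<lambda>y::real^('a bidx). g (Lbi y))"
  define Fn where "Fn = (\<lambda>s::real^('a bidx). if 1 < norm s then inverse (s \<bullet> s) ^ CARD('a bidx) * gn (inv_pt s) else 0)"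
  have Lbim: "Lbi \<in> (lebesgue :: (real^('a bidx)) measure) \<rightarrow>\<^sub>M (lebesgue :: 'a measure)"
    by (rule Lbi_transfer(1))
  have Lbm: "Lb \<in> (lebesgue :: 'a measure) \<rightarrow>\<^sub>M (lebesgue :: (real^('a bidx)) measure)"
    by (rule Lb_transfer(1))
  have Lbd: "distr (lebesgue :: 'a measure) (lebesgue :: (real^('a bidx)) measure) Lb = lebesgue"
    by (rule Lb_transfer(2))
  have gnm: "gn \<in> borel_measurable lebesgue"
    unfolding gn_def by (rule measurable_compose[OF Lbim gm])
  have gnT: "gn y = 0" if "y \<notin> ball 0 1 - {0}" for y
  proof -
    have "Lbi y \<notin> ball 0 1 - {0}"
      using that norm_Lbi[of y] by (auto simp: dist_norm)
    then show ?thesis by (simp add: gn_def gT)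
  qed
  have cv: "Fn \<in> borel_measurable lebesgue \<and> (\<integral>\<^sup>+x. ennreal (gn x) \<partial>lebesgue) = (\<integral>\<^sup>+s. ennreal (Fn s) \<partial>lebesgue)"
    unfolding Fn_def by (rule cvn[where C=C, OF gnm _ _ gnT]) (auto simp: gn_def g0 gC)
  have transf: "(\<integral>\<^sup>+y. ennreal (h y) \<partial>lebesgue) = (\<integral>\<^sup>+x. ennreal (h (Lb x)) \<partial>lebesgue)"
    if hm: "h \<in> borel_measurable (lebesgue :: (real^('a bidx)) measure)" for h
  proof -
    have "(\<integral>\<^sup>+y. ennreal (h y) \<partial>lebesgue) = (\<integral>\<^sup>+y. ennreal (h y) \<partial>(distr lebesgue lebesgue Lb))"
      by (simp add: Lbd)
    also have "\<dots> = (\<integral>\<^sup>+x. ennreal (h (Lb x)) \<partial>lebesgue)"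
      by (rule nn_integral_distr[OF Lbm]) (use hm in simp)
    finally show ?thesis .
  qed
  have "(\<integral>\<^sup>+x. ennreal (g x) \<partial>lebesgue) = (\<integral>\<^sup>+x. ennreal (gn (Lb x)) \<partial>lebesgue)"
    by (simp add: gn_def Lbi_Lb)
  also have "\<dots> = (\<integral>\<^sup>+y. ennreal (gn y) \<partial>lebesgue)"
    by (rule transf[OF gnm, symmetric])
  also have "\<dots> = (\<integral>\<^sup>+s. ennreal (Fn s) \<partial>lebesgue)"
    using cv by simp
  also have "\<dots> = (\<integral>\<^sup>+x. ennreal (Fn (Lb x)) \<partial>lebesgue)"
    using cv by (intro transf) simp
  also have "\<dots> = (\<integral>\<^sup>+s. ennreal (if 1 < norm s then inverse (s \<bullet> s) ^ DIM('a) * g (inv_pt s) else 0) \<partial>lebesgue)"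
  proof (rule nn_integral_cong)
    fix x :: 'a
    show "ennreal (Fn (Lb x)) = ennreal (if 1 < norm x then inverse (x \<bullet> x) ^ DIM('a) * g (inv_pt x) else 0)"
      unfolding Fn_def gn_def norm_Lb inner_Lb card_bidx inv_pt_Lb Lbi_Lb ..
  qed
  finally show ?thesis .
qed

lemma cva:
  fixes h :: "'a::euclidean_space \<Rightarrow> real"
  assumes h0: "\<And>x. 0 \<le> h x" and hz: "h 0 = 0"
  shows "(\<integral>\<^sup>+t\<in>ball 0 1. ennreal (h t) \<partial>lebesgue)
     \<le> (\<integral>\<^sup>+s. ennreal (if 1 < norm s then inverse (s \<bullet> s) ^ DIM('a) * h (inv_pt s) else 0) \<partial>lebesgue)"
    (is "?L \<le> ?R")
proof -
  have "integral\<^sup>S lebesgue G \<le> ?R"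
    if G: "simple_function lebesgue G" "G \<le> (\<lambda>t. ennreal (h t) * indicator (ball 0 1) t)" "\<forall>x. G x < top" for G
  proof -
    define g where "g = (\<lambda>x. enn2real (G x))"
    have Gm: "G \<in> borel_measurable lebesgue" using G(1) by (rule borel_measurable_simple_function)
    have gm: "g \<in> borel_measurable lebesgue" unfolding g_def using Gm by measurable
    have fin: "finite (G ` UNIV)" using simple_functionD(1)[OF G(1)] by simp
    define C where "C = Max (enn2real ` G ` UNIV)"
    have gC: "g x \<le> C" for x
      unfolding g_def C_def using fin by (intro Max_ge) auto
    have Gle: "G x \<le> ennreal (h x) * indicator (ball 0 1) x" for x
      using G(2) by (simp add: le_fun_def)
    have gT: "g x = 0" if "x \<notin> ball 0 1 - {0}" for x
    proof (cases "x = 0")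
      case True then show ?thesis using Gle[of x] hz by (simp add: g_def)
    next
      case False then show ?thesis using that Gle[of x] by (simp add: g_def)
    qed
    have gh: "g x \<le> h x" for x
    proof -
      have "G x \<le> ennreal (h x)" using Gle[of x] by (cases "norm x < 1") (auto simp: indicator_def)
      then show ?thesis unfolding g_def using h0[of x] by (simp add: enn2real_leI)
    qed
    have Gg: "G x = ennreal (g x)" for x
      using G(3) by (simp add: g_def ennreal_enn2real_if less_top)
    have "integral\<^sup>S lebesgue G = integral\<^sup>N lebesgue G"
      by (rule nn_integral_eq_simple_integral[OF G(1), symmetric])
    also have "\<dots> = (\<integral>\<^sup>+x. ennreal (g x) \<partial>lebesgue)"
      by (rule nn_integral_cong) (simp add: Gg)
    also have "\<dots> = (\<integral>\<^sup>+s. ennreal (if 1 < norm s then inverse (s \<bullet> s) ^ DIM('a) * g (inv_pt s) else 0) \<partial>lebesgue)"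
      by (rule cva_meas[OF gm _ gC gT]) (simp add: g_def)
    also have "\<dots> \<le> ?R"
      by (intro nn_integral_mono ennreal_leI) (auto intro!: mult_left_mono gh)
    finally show ?thesis .
  qed
  then show ?thesis
    unfolding nn_integral_def_finite[of _ "\<lambda>t. ennreal (h t) * indicator (ball 0 1) t"]
    by (intro SUP_least) auto
qed

lemma LlogL_nonneg: "0 \<le> t \<Longrightarrow> 0 \<le> LlogL t"
  unfolding LlogL_def by (intro mult_nonneg_nonneg ln_ge_zero) (use exp_ge_add_one_self[of 1] in auto)

lemma LlogL_zero [simp]: "LlogL 0 = 0"
  by (simp add: LlogL_def)

lemma LlogL_scale:
  assumes "0 \<le> t" "t \<le> 1" "0 \<le> x"
  shows "LlogL (t * x) \<le> t * LlogL x"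
proof -
  have e: "0 < exp (1::real)" by simp
  have "ln (exp 1 + t * x) \<le> ln (exp 1 + x)"
    using assms e mult_left_le_one_le[of x t] by (subst ln_le_cancel_iff) (auto intro: add_pos_nonneg)
  then have "(t * x) * ln (exp 1 + t * x) \<le> (t * x) * ln (exp 1 + x)"
    using assms by (intro mult_left_mono) auto
  then show ?thesis by (simp add: LlogL_def mult.assoc)
qed

lemma LlogL_key:
  assumes a: "0 \<le> a" and b: "1 \<le> b"
  shows "(1 / b) * LlogL (b * a) \<le> LlogL a + a * ln b"
proof -
  have e: "0 < exp (1::real)" by simp
  have le: "exp 1 + b * a \<le> (exp 1 + a) * b"
    using a b e mult_right_mono[of 1 b "exp 1"] by (simp add: algebra_simps)
  have p1: "0 < exp 1 + b * a" using a b e by (intro add_pos_nonneg) auto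
  have "ln (exp 1 + b * a) \<le> ln ((exp 1 + a) * b)"
    using le p1 by (subst ln_le_cancel_iff) auto
  also have "\<dots> = ln (exp 1 + a) + ln b"
    using a b e by (intro ln_mult_pos) (auto intro: add_pos_nonneg)
  finally have "a * ln (exp 1 + b * a) \<le> a * (ln (exp 1 + a) + ln b)"
    using a by (intro mult_left_mono) auto
  moreover have "(1 / b) * LlogL (b * a) = a * ln (exp 1 + b * a)"
    using b by (simp add: LlogL_def)
  moreover have "LlogL a + a * ln b = a * (ln (exp 1 + a) + ln b)"
    by (simp add: LlogL_def algebra_simps)
  ultimately show ?thesis by linarith
qed

lemma Vop_inv_pt:
  fixes s :: "'a::euclidean_space"
  assumes "s \<noteq> 0"
  shows "Vop f (inv_pt s) = norm s powr (2 * real DIM('a)) * f s"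
proof -
  have "inv_pt s /\<^sub>R (norm (inv_pt s))\<^sup>2 = inv_pt (inv_pt s)"
    by (simp add: inv_pt_def[of "inv_pt s"] power2_norm_eq_inner)
  then show ?thesis
    using assms by (simp add: Vop_def inv_pt_inv norm_inv_pt inverse_powr powr_minus)
qed

lemma Vop_zero: "Vop f 0 = 0"
  by (simp add: Vop_def)

lemma weight_eq:
  fixes s :: "'a::euclidean_space"
  assumes "s \<noteq> 0"
  shows "inverse (s \<bullet> s) ^ DIM('a) = 1 / norm s powr (2 * real DIM('a))"
proof -
  have "norm s powr (2 * real DIM('a)) = norm s powr (real (2 * DIM('a)))" by simp
  also have "\<dots> = norm s ^ (2 * DIM('a))" using assms by (intro powr_realpow) simp
  also have "\<dots> = (s \<bullet> s) ^ DIM('a)" by (simp add: power_mult power2_norm_eq_inner)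
  finally show ?thesis by (simp add: power_inverse divide_inverse)
qed

theorem lemmaA1:
  fixes f :: "'a::euclidean_space \<Rightarrow> real"
  assumes "f \<in> borel_measurable (lebesgue_on (- ball 0 1))"
  shows "orlicz_norm LlogL (ball 0 1) (Vop f)
           \<le> ennreal (2 * real DIM('a) + 2) * orlicz_norm LlogL (- ball 0 1) f
             + ennreal (2 * real DIM('a) + 2) *
               (\<integral>\<^sup>+ s\<in>(- ball 0 1). ennreal (\<bar>f s\<bar> * ln (1 + norm s)) \<partial>lebesgue)"
proof -
  define d where "d = real DIM('a)"
  define K where "K = 2 * d + 2"
  define E where "E = - ball (0::'a) 1"
  define N where "N = orlicz_norm LlogL E f"
  define I where "I = (\<integral>\<^sup>+ s\<in>E. ennreal (\<bar>f s\<bar> * ln (1 + norm s)) \<partial>lebesgue)"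
  define V where "V = orlicz_norm LlogL (ball 0 1) (Vop f)"
  have d0: "0 \<le> d" by (simp add: d_def)
  have Kpos: "0 < K" using d0 by (simp add: K_def)
  have Em: "E \<in> sets lebesgue"
    unfolding E_def using fmeasurableD[OF lmeasurable_ball[of "0::'a" 1]] by (simp only: Compl_in_sets_lebesgue)
  have goal: "V \<le> ennreal K * N + ennreal K * I"
  proof (cases "N = \<infinity> \<or> I = \<infinity>")
    case True
    then have TT: "ennreal K * N + ennreal K * I = top"
    proof -
      have K0: "ennreal K \<noteq> 0" using Kpos by simp
      show ?thesis using True by (elim disjE) (simp_all add: ennreal_mult_top K0)
    qed
    show ?thesis unfolding TT by (rule top_greatest)
  next
    case False
    then obtain i0 where i0: "I = ennreal i0" "0 \<le> i0"
      using less_top_ennreal[of I] by (auto simp: less_top)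
    obtain n0 where n0: "N = ennreal n0" "0 \<le> n0"
      using False less_top_ennreal[of N] by (auto simp: less_top)
    define f0 where "f0 = (\<lambda>x. if x \<in> E then f x else 0)"
    have f0m: "f0 \<in> borel_measurable lebesgue"
      unfolding f0_def using borel_measurable_if_I[OF assms[folded E_def] Em] .
    have key: "V \<le> ennreal (K * (c + i0))"
      if c0: "0 < c" and hc: "(\<integral>\<^sup>+ x\<in>E. ennreal (LlogL (\<bar>f x\<bar> / c)) \<partial>lebesgue) \<le> 1" for c
    proof -
      define l where "l = K * (c + i0)"
      have lpos: "0 < l" unfolding l_def using Kpos c0 i0 by simp
      have cl: "c \<le> l" unfolding l_def K_def using c0 i0 d0
        by (simp add: algebra_simps)
      define h where "h = (\<lambda>t. LlogL (\<bar>Vop f t\<bar> / l))"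
      have h0: "0 \<le> h t" for t unfolding h_def using lpos by (intro LlogL_nonneg) simp
      have hz: "h 0 = 0" by (simp add: h_def Vop_zero)
      have step1: "(\<integral>\<^sup>+t\<in>ball 0 1. ennreal (h t) \<partial>lebesgue)
          \<le> (\<integral>\<^sup>+s. ennreal (if 1 < norm s then inverse (s \<bullet> s) ^ DIM('a) * h (inv_pt s) else 0) \<partial>lebesgue)"
        by (rule cva[where h=h, OF h0 hz])
      define A where "A = (\<lambda>s. ennreal (LlogL (\<bar>f0 s\<bar> / c)) * indicator E s)"
      define B where "B = (\<lambda>s. ennreal (\<bar>f0 s\<bar> * ln (1 + norm s)) * indicator E s)"
      have idm: "(\<lambda>x::'a. x) \<in> borel_measurable lebesgue"
        by (rule measurable_completion) simp
      have indm: "indicator E \<in> borel_measurable lebesgue"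
        using Em by (rule borel_measurable_indicator)
      have Am: "A \<in> borel_measurable lebesgue"
        unfolding A_def LlogL_def using f0m Em idm indm by measurable
      have Bm: "B \<in> borel_measurable lebesgue"
        unfolding B_def using f0m Em idm indm by measurable
      have pt: "ennreal (if 1 < norm s then inverse (s \<bullet> s) ^ DIM('a) * h (inv_pt s) else 0)
                 \<le> ennreal (c / l) * A s + ennreal (2 * d / l) * B s" for s
      proof (cases "1 < norm s")
        case False then show ?thesis by simp
      next
        case True
        have s0: "s \<noteq> 0" using True by auto
        have sE: "s \<in> E" using True by (auto simp: E_def dist_norm)
        define b where "b = norm s powr (2 * d)"
        define a where "a = \<bar>f s\<bar> / l"
        have b1: "1 \<le> b" unfolding b_def using True d0 by (intro ge_one_powr_ge_zero) auto
        have a0: "0 \<le> a" unfolding a_def using lpos by simp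
        have hv: "h (inv_pt s) = LlogL (b * a)"
          unfolding h_def a_def using s0 b1 by (simp add: Vop_inv_pt b_def d_def abs_mult)
        have w: "inverse (s \<bullet> s) ^ DIM('a) = 1 / b"
          unfolding b_def d_def by (rule weight_eq[OF s0])
        have X: "(1 / b) * LlogL (b * a) \<le> LlogL a + a * ln b"
          by (rule LlogL_key[OF a0 b1])
        have P0: "0 \<le> LlogL (\<bar>f s\<bar> / c)" using c0 by (intro LlogL_nonneg) simp
        have "LlogL a = LlogL ((c / l) * (\<bar>f s\<bar> / c))" unfolding a_def using c0 by simp
        also have "\<dots> \<le> (c / l) * LlogL (\<bar>f s\<bar> / c)"
          using c0 lpos cl by (intro LlogL_scale) auto
        finally have Y1: "LlogL a \<le> (c / l) * LlogL (\<bar>f s\<bar> / c)" .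
        have lnb: "ln b = 2 * d * ln (norm s)" unfolding b_def using s0 by (simp add: ln_powr)
        have "ln (norm s) \<le> ln (1 + norm s)" using True by (subst ln_le_cancel_iff) auto
        then have "a * ln b \<le> a * (2 * d * ln (1 + norm s))"
          unfolding lnb using a0 d0 by (intro mult_left_mono) auto
        also have "\<dots> = (2 * d / l) * (\<bar>f s\<bar> * ln (1 + norm s))"
          unfolding a_def by (simp add: field_simps)
        finally have Y2: "a * ln b \<le> (2 * d / l) * (\<bar>f s\<bar> * ln (1 + norm s))" .
        have Q0: "0 \<le> \<bar>f s\<bar> * ln (1 + norm s)" by simp
        have real_ineq: "inverse (s \<bullet> s) ^ DIM('a) * h (inv_pt s)
            \<le> (c / l) * LlogL (\<bar>f s\<bar> / c) + (2 * d / l) * (\<bar>f s\<bar> * ln (1 + norm s))"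
          unfolding w hv using X Y1 Y2 by linarith
        have "ennreal (c / l) * A s + ennreal (2 * d / l) * B s
            = ennreal ((c / l) * LlogL (\<bar>f s\<bar> / c)) + ennreal ((2 * d / l) * (\<bar>f s\<bar> * ln (1 + norm s)))"
        proof -
          have As: "A s = ennreal (LlogL (\<bar>f s\<bar> / c))" using sE by (simp add: A_def f0_def)
          have Bs: "B s = ennreal (\<bar>f s\<bar> * ln (1 + norm s))" using sE by (simp add: B_def f0_def)
          have m1: "ennreal (c / l) * ennreal (LlogL (\<bar>f s\<bar> / c)) = ennreal ((c / l) * LlogL (\<bar>f s\<bar> / c))"
            using c0 lpos P0 by (intro ennreal_mult[symmetric]) auto
          have m2: "ennreal (2 * d / l) * ennreal (\<bar>f s\<bar> * ln (1 + norm s)) = ennreal ((2 * d / l) * (\<bar>f s\<bar> * ln (1 + norm s)))"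
            using d0 lpos Q0 by (intro ennreal_mult[symmetric]) auto
          show ?thesis unfolding As Bs m1 m2 ..
        qed
        also have "\<dots> = ennreal ((c / l) * LlogL (\<bar>f s\<bar> / c) + (2 * d / l) * (\<bar>f s\<bar> * ln (1 + norm s)))"
          using c0 lpos d0 P0 Q0 by (intro ennreal_plus[symmetric]) auto
        finally show ?thesis using True real_ineq by (simp add: ennreal_leI)
      qed
      have intA: "(\<integral>\<^sup>+s. A s \<partial>lebesgue) = (\<integral>\<^sup>+ x\<in>E. ennreal (LlogL (\<bar>f x\<bar> / c)) \<partial>lebesgue)"
        by (rule nn_integral_cong) (simp add: A_def f0_def indicator_def)
      have intB: "(\<integral>\<^sup>+s. B s \<partial>lebesgue) = I"
        unfolding I_def by (rule nn_integral_cong) (simp add: B_def f0_def indicator_def)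
      have "(\<integral>\<^sup>+t\<in>ball 0 1. ennreal (h t) \<partial>lebesgue)
          \<le> (\<integral>\<^sup>+s. ennreal (c / l) * A s + ennreal (2 * d / l) * B s \<partial>lebesgue)"
        using step1 by (rule order_trans) (rule nn_integral_mono, rule pt)
      also have "\<dots> = (\<integral>\<^sup>+s. ennreal (c / l) * A s \<partial>lebesgue) + (\<integral>\<^sup>+s. ennreal (2 * d / l) * B s \<partial>lebesgue)"
        using Am Bm by (intro nn_integral_add) auto
      also have "\<dots> = ennreal (c / l) * (\<integral>\<^sup>+s. A s \<partial>lebesgue) + ennreal (2 * d / l) * (\<integral>\<^sup>+s. B s \<partial>lebesgue)"
        using Am Bm by (simp add: nn_integral_cmult)
      also have "\<dots> \<le> ennreal (c / l) * 1 + ennreal (2 * d / l) * ennreal i0"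
        unfolding intA intB i0(1) using hc by (intro add_mono mult_left_mono) auto
      also have "\<dots> = ennreal ((c + 2 * d * i0) / l)"
      proof -
        have m2: "ennreal (2 * d / l) * ennreal i0 = ennreal ((2 * d / l) * i0)"
          using d0 lpos i0 by (intro ennreal_mult[symmetric]) auto
        have p: "ennreal (c / l) + ennreal ((2 * d / l) * i0) = ennreal (c / l + (2 * d / l) * i0)"
          using c0 lpos d0 i0 by (intro ennreal_plus[symmetric]) auto
        have q: "c / l + (2 * d / l) * i0 = (c + 2 * d * i0) / l"
          by (simp add: add_divide_distrib)
        show ?thesis unfolding mult_1_right m2 p q ..
      qed
      also have "\<dots> \<le> 1"
      proof -
        have "c + 2 * d * i0 \<le> l" unfolding l_def K_def using c0 i0 d0
          by (simp add: algebra_simps)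
        then have "(c + 2 * d * i0) / l \<le> 1" using lpos by simp
        then show ?thesis by (simp add: ennreal_le_1)
      qed
      finally have mem: "(\<integral>\<^sup>+t\<in>ball 0 1. ennreal (LlogL (\<bar>Vop f t\<bar> / l)) \<partial>lebesgue) \<le> 1"
        by (simp add: h_def)
      have "V \<le> ennreal l"
        unfolding V_def orlicz_norm_def using lpos mem by (intro INF_lower) simp
      then show ?thesis by (simp add: l_def)
    qed
    have "V \<le> ennreal K * ennreal n0 + ennreal K * ennreal i0"
    proof (rule ennreal_le_epsilon)
      fix e :: real assume e0: "0 < e"
      have "N < ennreal (n0 + e / K)" using n0 e0 Kpos by (simp add: ennreal_lessI)
      then obtain c where cS: "c \<in> {c::real. c > 0 \<and> (\<integral>\<^sup>+ x\<in>E. ennreal (LlogL (\<bar>f x\<bar> / c)) \<partial>lebesgue) \<le> 1}"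
          and cl: "ennreal c < ennreal (n0 + e / K)"
        unfolding N_def orlicz_norm_def by (auto simp: INF_less_iff)
      have c0: "0 < c" using cS by simp
      have hc: "(\<integral>\<^sup>+ x\<in>E. ennreal (LlogL (\<bar>f x\<bar> / c)) \<partial>lebesgue) \<le> 1" using cS by simp
      have "c < n0 + e / K" using cl c0 by (simp add: ennreal_less_iff)
      then have "K * c \<le> K * (n0 + e / K)" using Kpos by (intro mult_left_mono) auto
      moreover have "K * (n0 + e / K) = K * n0 + e" using Kpos by (simp add: distrib_left)
      moreover have "K * (c + i0) = K * c + K * i0" by (simp add: distrib_left)
      ultimately have "K * (c + i0) \<le> K * n0 + K * i0 + e" by linarith
      then have "ennreal (K * (c + i0)) \<le> ennreal (K * n0 + K * i0 + e)" by (rule ennreal_leI)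
      with key[OF c0 hc] have "V \<le> ennreal (K * n0 + K * i0 + e)" by (rule order_trans)
      also have "\<dots> = ennreal K * ennreal n0 + ennreal K * ennreal i0 + ennreal e"
      proof -
        have k1: "ennreal (K * n0) = ennreal K * ennreal n0" using Kpos n0 by (intro ennreal_mult) auto
        have k2: "ennreal (K * i0) = ennreal K * ennreal i0" using Kpos i0 by (intro ennreal_mult) auto
        have s1: "ennreal (K * n0 + K * i0 + e) = ennreal (K * n0 + K * i0) + ennreal e"
          using Kpos n0 i0 e0 by (intro ennreal_plus) auto
        have s2: "ennreal (K * n0 + K * i0) = ennreal (K * n0) + ennreal (K * i0)"
          using Kpos n0 i0 by (intro ennreal_plus) auto
        show ?thesis unfolding s1 s2 k1 k2 ..
      qed
      finally show "V \<le> ennreal K * ennreal n0 + ennreal K * ennreal i0 + ennreal e" .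
    qed
    then show ?thesis using n0 i0 by simp
  qed
  then show ?thesis unfolding V_def N_def I_def K_def d_def E_def .
qed

end
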